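(* Let $f(k)$ denote the largest power of $2$ dividing $k\in\mathbb{N}_1$, and let $\gamma\in[0,1)$. Then $$\sum_{k=1}^{\infty}\gamma^k f(k)\le\frac{1}{1-\gamma}\left(\frac{1}{e}+\frac{1}{\ln 2}+\frac{1}{2}\log_2\ln 16+\frac{1}{2}\log_2\frac{1}{1-\gamma}\right).$$
   Context: The function $f$ is OEIS A6519: $f(k)=1$ for $k$ odd and $f(k)=2f(k/2)$ for $k$ even. *)

theory Defs
  imports Complex_Main
begin

text \<open>OEIS A6519: f(k) = 1 for k odd, f(k) = 2 f(k/2) for k even
  (the largest power of 2 dividing k, for k \<ge> 1). The value at 0 is irrelevant; set to 0.\<close>
function f :: "nat \<Rightarrow> nat" where
  "f k = (if k = 0 then 0 else if odd k then 1 else 2 * f (k div 2))"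
  by auto
termination by (relation "measure id") auto

declare f.simps[simp del]

end

theory Submission
  imports Defs "HOL-Analysis.Analysis"
begin

lemma f_odd_aux: "odd k \<Longrightarrow> f k = 1"
  by (subst f.simps) (cases k, auto)

lemma f_le: "f k \<le> k"
proof (induction k rule: less_induct)
  case (less k)
  show ?case
  proof (cases "k = 0 \<or> odd k")
    case True
    then show ?thesis
    proof
      assume "k = 0" then show ?thesis by (subst f.simps) simp
    next
      assume "odd k" then have "k \<ge> 1" by (cases k) auto
      then show ?thesis using f_odd_aux[OF \<open>odd k\<close>] by simp
    qed
  next
    case False
    then have "f k = 2 * f (k div 2)" by (subst f.simps) auto
    moreover have "f (k div 2) \<le> k div 2" using less False by auto
    ultimately show ?thesis by linarith
  qed
qed

lemma f_odd: "odd k \<Longrightarrow> f k = 1"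
  by (rule f_odd_aux)

lemma f_even: "k > 0 \<Longrightarrow> f (2 * k) = 2 * f k"
  by (subst f.simps) auto

definition P :: "real \<Rightarrow> nat \<Rightarrow> real" where
  "P x n = (\<Sum>k<n. x ^ (Suc k) * real (f (Suc k)))"

lemma kx_bound:
  fixes x :: real
  assumes "0 \<le> x" "x < 1"
  shows "(1 - x)^2 * (\<Sum>k<n. real (Suc k) * x ^ Suc k) = x - (n+1) * x^(n+1) + n * x^(n+2)"
proof (induction n)
  case 0
  then show ?case by simp
next
  case (Suc n)
  show ?case
    unfolding sum.lessThan_Suc distrib_left Suc
    by (simp add: power2_eq_square algebra_simps)
qed

lemma P_le_B:
  assumes "0 \<le> x" "x < 1"
  shows "P x n \<le> x / (1 - x)^2"
proof -
  have "P x n \<le> (\<Sum>k<n. real (Suc k) * x ^ Suc k)"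
    unfolding P_def
  proof (rule sum_mono)
    fix k assume "k \<in> {..<n}"
    have "real (f (Suc k)) \<le> real (Suc k)" using f_le of_nat_mono by blast
    then show "x ^ Suc k * real (f (Suc k)) \<le> real (Suc k) * x ^ Suc k"
      using assms by (simp add: mult.commute mult_right_mono)
  qed
  moreover have "(1 - x)^2 * (\<Sum>k<n. real (Suc k) * x ^ Suc k) \<le> x"
  proof -
    have "real n * x \<le> real n * 1" using assms by (intro mult_left_mono) auto
    then have "x^(n+1) * (n+1 - n * x) \<ge> 0"
      using assms by (intro mult_nonneg_nonneg) auto
    then show ?thesis unfolding kx_bound[OF assms] by (simp add: algebra_simps power2_eq_square)
  qed
  moreover have "(1 - x)^2 > 0" using assms by simp
  ultimately show ?thesis
    by (smt (verit) mult.commute pos_le_divide_eq)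
qed

lemma P_double: "P x (2 * n) = (\<Sum>m<n. x ^ (2*m+1)) + 2 * P (x^2) n"
proof (induction n)
  case 0
  then show ?case by (simp add: P_def)
next
  case (Suc n)
  have e: "2 * Suc n = Suc (Suc (2 * n))" by simp
  have o: "f (Suc (2*n)) = 1" by (simp add: f_odd)
  have ev: "f (Suc (Suc (2*n))) = 2 * f (Suc n)"
    using f_even[of "Suc n"] by (simp add: mult_2)
  have pw: "x ^ Suc (Suc (2*n)) = (x^2) ^ Suc n"
    by (simp only: e[symmetric] power_mult)
  have L0: "P x (2 * Suc n) = P x (2*n) + x ^ Suc (2*n) * real (f (Suc (2*n))) + x ^ Suc (Suc (2*n)) * real (f (Suc (Suc (2*n))))"
    unfolding e P_def by (simp only: sum.lessThan_Suc add.assoc)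
  have L: "P x (2 * Suc n) = P x (2*n) + x ^ Suc (2*n) + (x^2) ^ Suc n * (2 * real (f (Suc n)))"
    using L0 unfolding o ev pw by simp
  have R: "P (x^2) (Suc n) = P (x^2) n + (x^2) ^ Suc n * real (f (Suc n))"
    by (simp add: P_def)
  have R2: "(\<Sum>m<Suc n. x ^ (2*m+1)) = (\<Sum>m<n. x ^ (2*m+1)) + x ^ Suc (2*n)"
    by simp
  show ?case unfolding L R R2 Suc by (simp add: algebra_simps)
qed

lemma P_mono:
  assumes "0 \<le> x" "m \<le> n"
  shows "P x m \<le> P x n"
  unfolding P_def using assms
  by (intro sum_mono2) auto

lemma P_rec:
  assumes "0 \<le> x" "x < 1"
  shows "P x n \<le> x / (1 - x^2) + 2 * P (x^2) n"
proof -
  have "P x n \<le> P x (2*n)" using P_mono assms by simp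
  moreover have "(\<Sum>m<n. x ^ (2*m+1)) \<le> x / (1 - x^2)"
  proof -
    have x2: "x^2 < 1" "x^2 \<noteq> 1" using assms power_strict_mono[of x 1 2] by auto
    have "(\<Sum>m<n. x ^ (2*m+1)) = x * (\<Sum>m<n. (x^2) ^ m)"
      by (simp add: sum_distrib_left power_mult[symmetric] mult.commute)
    also have "\<dots> = x * ((1 - (x^2)^n) / (1 - x^2))"
      using x2 by (simp add: sum_gp_strict)
    also have "\<dots> \<le> x * (1 / (1 - x^2))"
      using assms x2 by (intro mult_left_mono divide_right_mono) auto
    finally show ?thesis by simp
  qed
  ultimately show ?thesis using P_double[of x n] by linarith
qed

definition H :: "nat \<Rightarrow> real \<Rightarrow> real" where
  "H J x = (\<Sum>j<J. 2^j * x^(2^j) / (1 - x^(2^(j+1))))"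

lemma H_Suc: "H (Suc J) x = x / (1 - x^2) + 2 * H J (x^2)"
proof -
  have pt: "2 ^ Suc j * x ^ 2 ^ Suc j / (1 - x ^ 2 ^ (Suc j + 1)) =
        2 * (2 ^ j * (x^2) ^ 2 ^ j / (1 - (x^2) ^ 2 ^ (j + 1)))" for j :: nat
  proof -
    have a1: "2 * 2^j = (2::nat)^(Suc j)" by simp
    have b1: "2 * 2^(j+1) = (2::nat)^(Suc j + 1)" by simp
    have a: "(x^2) ^ 2 ^ j = x ^ 2 ^ Suc j" by (simp only: power_mult[symmetric] a1)
    have b: "(x^2) ^ 2 ^ (j+1) = x ^ 2 ^ (Suc j + 1)" by (simp only: power_mult[symmetric] b1)
    show ?thesis unfolding a b by simp
  qed
  show ?thesis
    unfolding H_def sum.lessThan_Suc_shift pt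
    by (simp add: sum_distrib_left)
qed

lemma main_ind:
  assumes "0 \<le> x" "x < 1"
  shows "P x n \<le> H J x + 2^J * ((x^(2^J)) / (1 - x^(2^J))^2)"
  using assms
proof (induction J arbitrary: x)
  case 0
  then show ?case using P_le_B[of x n] by (simp add: H_def power2_eq_square)
next
  case (Suc J)
  have x2: "0 \<le> x^2" "x^2 < 1" using Suc.prems power_strict_mono[of x 1 2] by auto
  have pw: "(x^2)^(2^J) = x^(2^Suc J)" by (simp add: power_mult[symmetric])
  have "P x n \<le> x / (1 - x^2) + 2 * P (x^2) n" using P_rec Suc.prems by blast
  also have "\<dots> \<le> x / (1 - x^2) + 2 * (H J (x^2) + 2^J * (((x^2)^(2^J)) / (1 - (x^2)^(2^J))^2))"
    using Suc.IH[OF x2] by simp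
  also have "\<dots> = H (Suc J) x + 2^Suc J * ((x^(2^Suc J)) / (1 - x^(2^Suc J))^2)"
    unfolding H_Suc pw by (simp add: algebra_simps)
  finally show ?case .
qed

lemma pair_ineq:
  fixes x :: real
  assumes "0 \<le> x" "x \<le> 1" "i < n"
  shows "2 * x^n \<le> x^i + x^(2*n - 1 - i)"
proof -
  have a: "x^i * x^(n-1-i) = x^(n-1)" using assms(3) by (simp add: power_add[symmetric])
  have b: "x^n * x^(n-1-i) = x^(2*n-1-i)" using assms(3) by (simp add: power_add[symmetric] mult_2)
  have c: "x^n \<le> x^(n-1)" using assms by (intro power_decreasing) auto
  have d: "x^n \<le> x^i" using assms by (intro power_decreasing) auto
  have e: "x^(n-1-i) \<le> 1" using assms by (simp add: power_le_one)
  have "0 \<le> (x^i - x^n) * (1 - x^(n-1-i))" using d e by simp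
  then show ?thesis using a b c by (simp add: algebra_simps)
qed

lemma amgm:
  fixes x :: real
  assumes "0 \<le> x" "x \<le> 1"
  shows "2 * n * x^n \<le> (\<Sum>i<2*n. x^i)"
proof -
  have split: "(\<Sum>i<2*n. x^i) = (\<Sum>i<n. x^i) + (\<Sum>i<n. x^(n+i))"
  proof -
    have "(\<Sum>i<2*n. x^i) = (\<Sum>i\<in>{0..<n}. x^i) + (\<Sum>i\<in>{n..<n+n}. x^i)"
      by (simp add: mult_2 lessThan_atLeast0 sum.atLeastLessThan_concat)
    also have "(\<Sum>i\<in>{n..<n+n}. x^i) = (\<Sum>i\<in>{0+n..<n+n}. x^i)" by simp
    also have "\<dots> = (\<Sum>i\<in>{0..<n}. x^(i+n))" by (rule sum.shift_bounds_nat_ivl)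
    finally show ?thesis by (simp add: lessThan_atLeast0 add.commute)
  qed
  have refl: "(\<Sum>i<n. x^(n+i)) = (\<Sum>i<n. x^(2*n-1-i))"
  proof -
    have "(\<Sum>i<n. x^(2*n-1-i)) = (\<Sum>i<n. (\<lambda>i. x^(n+i)) (n - Suc i))"
      by (intro sum.cong) (auto simp: mult_2)
    also have "\<dots> = (\<Sum>i<n. x^(n+i))" by (rule sum.nat_diff_reindex)
    finally show ?thesis by simp
  qed
  have "(\<Sum>i<n. 2 * x^n) \<le> (\<Sum>i<n. x^i + x^(2*n-1-i))"
    using pair_ineq assms by (intro sum_mono) auto
  then show ?thesis using split refl by (simp add: sum.distrib)
qed

lemma term_bound:
  fixes x :: real
  assumes "0 \<le> x" "x < 1"
  shows "(1 - x) * (2^j * x^(2^j) / (1 - x^(2^(j+1)))) \<le> 1/2"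
proof -
  define m :: nat where "m = 2^j"
  have m2: "2^(j+1) = 2*m" unfolding m_def by simp
  have gp: "(\<Sum>i<2*m. x^i) = (1 - x^(2*m)) / (1 - x)"
    using assms by (simp add: sum_gp_strict)
  have spos: "(\<Sum>i<2*m. x^i) > 0"
  proof -
    have "m > 0" unfolding m_def by simp
    then have "(\<Sum>i<2*m. x^i) \<ge> (\<Sum>i\<in>{0}. x^i)"
      using assms by (intro sum_mono2) auto
    then show ?thesis by simp
  qed
  have am: "2 * m * x^m \<le> (\<Sum>i<2*m. x^i)" using amgm assms by simp
  have eq: "1 - x^(2*m) = (1 - x) * (\<Sum>i<2*m. x^i)" using gp assms by simp
  have "(1 - x) * (m * x^m / (1 - x^(2*m))) = m * x^m / (\<Sum>i<2*m. x^i)"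
    unfolding eq using assms spos by (simp add: field_simps)
  also have "\<dots> \<le> 1/2" using am spos by (simp add: field_simps)
  finally show ?thesis unfolding m2 m_def by simp
qed

lemma H_bound:
  assumes "0 \<le> x" "x < 1"
  shows "(1 - x) * H J x \<le> J / 2"
proof -
  have "(1 - x) * H J x = (\<Sum>j<J. (1 - x) * (2^j * x^(2^j) / (1 - x^(2^(j+1)))))"
    unfolding H_def by (simp add: sum_distrib_left)
  also have "\<dots> \<le> (\<Sum>j<J. 1/2)" using term_bound assms by (intro sum_mono) auto
  finally show ?thesis by simp
qed

lemma tail_bound:
  fixes c q :: real
  assumes c: "1 \<le> c" and q: "0 \<le> q" "q \<le> exp (-c)"
  shows "c * (q / (1 - q)^2) \<le> 6/5"
proof -
  define D where "D = 1 + c + c^2/2"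
  have D: "D \<le> exp c" unfolding D_def using exp_lower_Taylor_quadratic c by simp
  have "c * c \<ge> 1 * 1" using c by (intro mult_mono) auto
  then have Dpos: "D \<ge> 5/2" unfolding D_def using c by (simp add: power2_eq_square)
  have "q * exp c \<le> 1" using q by (simp add: exp_minus field_simps)
  then have qD: "q * D \<le> 1" using D q by (smt (verit) mult_left_mono)
  define q0 where "q0 = 1 / D"
  have qq0: "q \<le> q0" unfolding q0_def using qD Dpos by (simp add: field_simps)
  have q0le: "q0 \<le> 2/5" unfolding q0_def using Dpos by (simp add: field_simps)
  have poly: "6 * (D - 1)^2 \<ge> 5 * c * D"
  proof -
    have "6 * (D - 1)^2 - 5 * c * D = c * (3/2 * c^3 + 7/2 * c^2 + c - 5)"
      unfolding D_def by (simp add: power2_eq_square power3_eq_cube algebra_simps)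
    moreover have "3/2 * c^3 + 7/2 * c^2 + c - 5 \<ge> 0"
    proof -
      have "c^2 \<ge> 1" "c^3 \<ge> 1" using c by (simp_all add: one_le_power)
      then show ?thesis using c by linarith
    qed
    ultimately show ?thesis using c by (smt (verit) mult_nonneg_nonneg)
  qed
  have g0: "6 * (1 - q0)^2 - 5 * c * q0 \<ge> 0"
  proof -
    have "6 * (1 - q0)^2 - 5 * c * q0 = (6 * (D - 1)^2 - 5 * c * D) / D^2"
      unfolding q0_def using Dpos by (simp add: field_simps power2_eq_square)
    then show ?thesis using poly Dpos by simp
  qed
  have "6 * (1 - q)^2 - 5 * c * q = (6 * (1 - q0)^2 - 5 * c * q0) + (q0 - q) * (12 - 6*q - 6*q0 + 5*c)"
    by (simp add: power2_eq_square algebra_simps)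
  moreover have "(q0 - q) * (12 - 6*q - 6*q0 + 5*c) \<ge> 0"
    using qq0 q0le q c by (intro mult_nonneg_nonneg) auto
  ultimately have "5 * c * q \<le> 6 * (1 - q)^2" using g0 by linarith
  moreover have "(1 - q)^2 > 0" using qq0 q0le by simp
  ultimately show ?thesis by (simp add: field_simps)
qed

lemma const_bound: "17/10 \<le> 1 / exp 1 + 1 / ln 2 + 1/2 * log 2 (ln 16)"
proof -
  have e1: "1 / exp 1 \<ge> (100/272::real)" using e_less_272 by (simp add: field_simps)
  have "(1 + 1 + 1^2/2::real) \<le> exp 1" using exp_lower_Taylor_quadratic[of 1] by simp
  then have "ln (2::real) < ln (exp 1)" by (intro ln_less_cancel_iff[THEN iffD2]) auto
  then have l2: "ln 2 < (1::real)" by simp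
  have l2p: "ln 2 > (0::real)" by simp
  have e2: "1 / ln 2 \<ge> (1::real)" using l2 l2p by (simp add: field_simps)
  have h16: "(16::real) = 2^4" by simp
  have "ln (16::real) = 4 * ln 2" unfolding h16 ln_realpow by simp
  then have "ln (16::real) \<ge> 2" using ln2_ge_two_thirds by simp
  then have "log 2 (ln 16) \<ge> log 2 (2::real)"
    by (intro log_le_cancel_iff[THEN iffD2]) auto
  then have e3: "log 2 (ln 16) \<ge> (1::real)" by simp
  show ?thesis using e1 e2 e3 by linarith
qed

theorem lemma6:
  fixes \<gamma> :: real
  assumes "0 \<le> \<gamma>" and "\<gamma> < 1"
  shows "(\<Sum>k. \<gamma> ^ (Suc k) * real (f (Suc k)))
    \<le> 1 / (1 - \<gamma>) * (1 / exp 1 + 1 / ln 2 + 1/2 * log 2 (ln 16)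
                        + 1/2 * log 2 (1 / (1 - \<gamma>)))"
proof -
  define u where "u = 1 - \<gamma>"
  have u: "0 < u" "u \<le> 1" using assms unfolding u_def by auto
  define L where "L = log 2 (1 / u)"
  have L0: "L \<ge> 0" unfolding L_def using u by simp
  define J where "J = nat \<lceil>L\<rceil>"
  have JL: "real J \<ge> L" "real J < L + 1" unfolding J_def using L0 by linarith+
  define N :: nat where "N = 2^J"
  have "real N = 2 powr real J" unfolding N_def by (simp add: powr_realpow)
  also have "\<dots> \<ge> 2 powr L" using JL by simp
  also have "2 powr L = 1 / u" unfolding L_def using u by simp
  finally have Nu: "1 / u \<le> real N" .
  define c where "c = real N * u"
  have c1: "1 \<le> c" unfolding c_def using Nu u by (simp add: field_simps)
  define q where "q = \<gamma> ^ N"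
  have q0: "0 \<le> q" unfolding q_def using assms by simp
  have "\<gamma> \<le> exp (-u)" using exp_ge_add_one_self[of "-u"] unfolding u_def by simp
  then have "q \<le> exp (-u) ^ N" unfolding q_def using assms by (intro power_mono) auto
  also have "\<dots> = exp (-c)" unfolding c_def by (simp add: exp_of_nat_mult[symmetric])
  finally have qe: "q \<le> exp (-c)" .
  have tail: "c * (q / (1 - q)^2) \<le> 6/5" using tail_bound c1 q0 qe by blast
  define K where "K = 1 / exp 1 + 1 / ln 2 + 1/2 * log 2 (ln 16)"
  have K: "17/10 \<le> K" unfolding K_def by (rule const_bound)
  have part: "P \<gamma> n \<le> 1 / u * (K + 1/2 * L)" for n
  proof -
    have "P \<gamma> n \<le> H J \<gamma> + 2^J * ((\<gamma>^(2^J)) / (1 - \<gamma>^(2^J))^2)"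
      using main_ind assms by blast
    also have "2^J * ((\<gamma>^(2^J)) / (1 - \<gamma>^(2^J))^2) = real N * (q / (1 - q)^2)"
      unfolding N_def q_def by simp
    finally have "u * P \<gamma> n \<le> u * (H J \<gamma> + real N * (q / (1 - q)^2))"
      using u by (intro mult_left_mono) auto
    also have "\<dots> = u * H J \<gamma> + c * (q / (1 - q)^2)"
      unfolding c_def by (simp add: algebra_simps)
    finally have "u * P \<gamma> n \<le> u * H J \<gamma> + c * (q / (1 - q)^2)" .
    also have "\<dots> \<le> J / 2 + 6/5" using H_bound[OF assms, of J] tail unfolding u_def by linarith
    also have "\<dots> \<le> K + 1/2 * L" using JL K by linarith
    finally show ?thesis using u by (simp add: field_simps)
  qed
  have nonneg: "0 \<le> \<gamma> ^ (Suc k) * real (f (Suc k))" for k using assms by simp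
  have summ: "summable (\<lambda>k. \<gamma> ^ (Suc k) * real (f (Suc k)))"
  proof (rule bounded_imp_summable)
    show "0 \<le> \<gamma> ^ (Suc k) * real (f (Suc k))" for k by (rule nonneg)
    show "(\<Sum>k\<le>n. \<gamma> ^ (Suc k) * real (f (Suc k))) \<le> 1 / u * (K + 1/2 * L)" for n
      using part[of "Suc n"] unfolding P_def by (simp add: lessThan_Suc_atMost)
  qed
  have "(\<Sum>k. \<gamma> ^ (Suc k) * real (f (Suc k))) \<le> 1 / u * (K + 1/2 * L)"
    using summ part unfolding P_def by (intro suminf_le_const) auto
  then show ?thesis unfolding u_def K_def L_def .
qed

end
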